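(* Let $\rho\in(0,1)$ and $\lambda=\frac{1-\rho}{1+\rho}$. Let $(x_i)_{i\in\mathbb Z}$ be real numbers with $|x_i|<M$ for all $i$, for some constant $M<\infty$. Define $y_i(k)$ for all $i\in\mathbb Z$ and $k\ge 0$ by $y_i(0)=\lambda x_i$; $y_i(1)=y_i(0)+\rho\,(y_{i-1}(0)+y_{i+1}(0))$; $y_i(2)=y_i(1)+\rho\,(y_{i-1}(1)-y_{i-1}(0))+\rho\,(y_{i+1}(1)-y_{i+1}(0))-2\rho^2 y_i(0)$; and for $k\ge 2$, $y_i(k+1)=y_i(k)+\rho\,(y_{i-1}(k)-y_{i-1}(k-1))+\rho\,(y_{i+1}(k)-y_{i+1}(k-1))-\rho^2\,(y_i(k-1)-y_i(k-2))$. Then for every $i\in\mathbb Z$, $$\lim_{k\to\infty}y_i(k)=\frac{1-\rho}{1+\rho}\Big(x_i+\sum_{j=1}^\infty\rho^j\,(x_{i-j}+x_{i+j})\Big).$$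
   Context: Sensors indexed by $i\in\mathbb Z$ are placed along a line; sensor $i$ holds a time-invariant measurement $x_i$ and a consensus variable $y_i(k)$ at discrete times $k=0,1,2,\dots$; sensor $i$ may only use its own values and those of sensors $i-1$ and $i+1$. *)

theory Defs
  imports "HOL-Analysis.Analysis"
begin

end

theory Submission
  imports Defs
begin

theorem theorem1:
  fixes \<rho> lam M :: real and x :: "int \<Rightarrow> real" and y :: "int \<Rightarrow> nat \<Rightarrow> real"
  assumes rho: "0 < \<rho>" "\<rho> < 1"
    and lam: "lam = (1 - \<rho>) / (1 + \<rho>)"
    and bnd: "\<And>i. \<bar>x i\<bar> < M"
    and y0: "\<And>i. y i 0 = lam * x i"
    and y1: "\<And>i. y i 1 = y i 0 + \<rho> * (y (i - 1) 0 + y (i + 1) 0)"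
    and y2: "\<And>i. y i 2 = y i 1 + \<rho> * (y (i - 1) 1 - y (i - 1) 0)
                 + \<rho> * (y (i + 1) 1 - y (i + 1) 0) - 2 * \<rho>\<^sup>2 * y i 0"
    and yk: "\<And>i k. k \<ge> 2 \<Longrightarrow> y i (k + 1) = y i k + \<rho> * (y (i - 1) k - y (i - 1) (k - 1))
                 + \<rho> * (y (i + 1) k - y (i + 1) (k - 1)) - \<rho>\<^sup>2 * (y i (k - 1) - y i (k - 2))"
  shows "\<forall>i. (\<lambda>k. y i k) \<longlonglongrightarrow>
           (1 - \<rho>) / (1 + \<rho>) * (x i + (\<Sum>j. \<rho> ^ (j + 1) * (x (i - int (j + 1)) + x (i + int (j + 1)))))"
proof -
  define a where "a i j = \<rho> ^ (j + 1) * (x (i - int (j + 1)) + x (i + int (j + 1)))" for i j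
  define F where "F i k = lam * (x i + (\<Sum>j<k. a i j))" for i k
  have FS: "F i (Suc k) = F i k + lam * \<rho> ^ (Suc k) * (x (i - int (Suc k)) + x (i + int (Suc k)))" for i k
    by (simp add: F_def a_def algebra_simps)
  have F0: "F i 0 = lam * x i" for i by (simp add: F_def)
  have main: "\<forall>i. y i k = F i k" for k
  proof (induction k rule: nat_less_induct)
    case (1 k)
    consider "k = 0" | "k = 1" | "k = 2" | n where "k = n + 3"
    proof -
      assume a0: "k = 0 \<Longrightarrow> thesis" and a1: "k = 1 \<Longrightarrow> thesis" and a2: "k = 2 \<Longrightarrow> thesis"
        and a3: "\<And>n. k = n + 3 \<Longrightarrow> thesis"
      show thesis
      proof (cases "k \<ge> 3")
        case True then have "k = (k - 3) + 3" by simp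
        then show thesis by (rule a3)
      next
        case False then have "k = 0 \<or> k = 1 \<or> k = 2" by linarith
        then show thesis using a0 a1 a2 by blast
      qed
    qed
    then show ?case
    proof cases
      case 1 then show ?thesis using y0 F0 by simp
    next
      case 2
      show ?thesis using y0 y1 F0 FS[of _ 0] 2 by (auto simp: algebra_simps)
    next
      case 3
      have e: "\<And>i. i - 1 - 1 = i - (2::int)" "\<And>i. i + 1 + 1 = i + (2::int)" "\<And>i. i - 1 + 1 = (i::int)" "\<And>i. i + 1 - 1 = (i::int)" by auto
      show ?thesis using 3 y0 y1 y2 F0 FS[of _ 0] FS[of _ 1]
        by (auto simp: algebra_simps power2_eq_square e numeral_2_eq_2)
    next
      case 4
      have IH: "\<forall>i. y i (n+2) = F i (n+2)" "\<forall>i. y i (n+1) = F i (n+1)" "\<forall>i. y i n = F i n"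
        using 1 4 by auto
      show ?thesis
      proof
        fix i
        have r: "y i (n + 2 + 1) = y i (n+2) + \<rho> * (y (i - 1) (n+2) - y (i - 1) (n+1))
                 + \<rho> * (y (i + 1) (n+2) - y (i + 1) (n+1)) - \<rho>\<^sup>2 * (y i (n+1) - y i n)"
          using yk[of "n+2" i] by simp
        have d: "F j (Suc m) - F j m = lam * \<rho> ^ (Suc m) * (x (j - int (Suc m)) + x (j + int (Suc m)))" for j m
          using FS[of j m] by simp
        have e1: "i - 1 - int (Suc (n+1)) = i - int (Suc (n+2))" "i - 1 + int (Suc (n+1)) = i + int (Suc n)"
          "i + 1 - int (Suc (n+1)) = i - int (Suc n)" "i + 1 + int (Suc (n+1)) = i + int (Suc (n+2))"
          by auto
        have "y i k = F i (n+2) + \<rho> * (F (i - 1) (Suc (n+1)) - F (i - 1) (n+1))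
                 + \<rho> * (F (i + 1) (Suc (n+1)) - F (i + 1) (n+1)) - \<rho>\<^sup>2 * (F i (Suc n) - F i n)"
          using r IH 4 by (simp add: numeral_3_eq_3)
        also have "\<dots> = F i (n+2) + lam * \<rho> ^ (Suc (n+2)) * (x (i - int (Suc (n+2))) + x (i + int (Suc (n+2))))"
          unfolding d e1 by (simp add: algebra_simps power2_eq_square)
        also have "\<dots> = F i k" using FS[of i "n+2"] 4 by (simp add: numeral_3_eq_3)
        finally show "y i k = F i k" .
      qed
    qed
  qed
  show ?thesis
  proof
    fix i
    have "summable (\<lambda>j. a i j)"
    proof (rule summable_comparison_test[where g="\<lambda>j. 2 * M * \<rho> ^ (j+1)"])
      show "\<exists>N. \<forall>n\<ge>N. norm (a i n) \<le> 2 * M * \<rho> ^ (n + 1)"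
      proof (intro exI allI impI)
        fix n :: nat
        have "\<bar>x (i - int (n + 1)) + x (i + int (n + 1))\<bar> \<le> 2 * M"
          using bnd[of "i - int (n + 1)"] bnd[of "i + int (n + 1)"] by linarith
        hence "\<rho> ^ (n+1) * \<bar>x (i - int (n + 1)) + x (i + int (n + 1))\<bar> \<le> \<rho> ^ (n+1) * (2 * M)"
          by (rule mult_left_mono) (use rho in simp)
        thus "norm (a i n) \<le> 2 * M * \<rho> ^ (n + 1)"
        proof -
          have "norm (a i n) = \<rho> ^ (n+1) * \<bar>x (i - int (n + 1)) + x (i + int (n + 1))\<bar>"
            unfolding a_def real_norm_def abs_mult using rho by simp
          with \<open>\<rho> ^ (n+1) * _ \<le> _\<close> show ?thesis by (simp add: algebra_simps)
        qed
      qed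
      show "summable (\<lambda>j. 2 * M * \<rho> ^ (j + 1))"
        using rho by (intro summable_mult summable_mult2 summable_geometric) simp
    qed
    hence "(\<lambda>k. \<Sum>j<k. a i j) \<longlonglongrightarrow> (\<Sum>j. a i j)" by (rule summable_LIMSEQ)
    hence "(\<lambda>k. F i k) \<longlonglongrightarrow> lam * (x i + (\<Sum>j. a i j))"
      unfolding F_def by (intro tendsto_intros)
    thus "(\<lambda>k. y i k) \<longlonglongrightarrow>
           (1 - \<rho>) / (1 + \<rho>) * (x i + (\<Sum>j. \<rho> ^ (j + 1) * (x (i - int (j + 1)) + x (i + int (j + 1)))))"
      using main lam by (simp add: a_def)
  qed
qed

end
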